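(* Assume the family $\{\mathbf M_\theta\}_{\theta\in\mathcal I}$ of expectation matrices is good with respect to $\nu$, the process is uniformly allowable with constant $\alpha>0$, and there is $M<\infty$ with $\frac{\partial^2 f_\theta^{(k)}}{\partial s_j\partial s_i}(\mathbf 1)<M$ for all $\theta\in\mathcal I$, $i,j,k\in[N]$. Assume $\lambda>0$ and let $0<\rho<1$ with $\rho e^{\lambda}>1$. For $\theta\in\mathcal I$ set $\mathbf g_\theta(\mathbf s)=\mathbf 1-\rho\,\mathbf M_\theta(\mathbf 1-\mathbf s)$. Then there exists $\delta>0$ such that for all $\theta\in\mathcal I$ and all $\mathbf s\in[0,1]^N$ with $\max_{j\in[N]}(1-s_j)\le\delta$, we have $\mathbf g_\theta(\mathbf s)\ge\mathbf f_\theta(\mathbf s)$ componentwise.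
   Context: $N\ge2$, $\mathcal I$ countable, $\Sigma=\mathcal I^{\mathbb N}$, $\nu$ a shift-invariant ergodic probability measure on $\Sigma$; $[N]=\{0,\dots,N-1\}$; $\mathbf 1$ the all-one vector. For $\theta\in\mathcal I$, $\mathbf f_\theta=(f_\theta^{(0)},\dots,f_\theta^{(N-1)})$ with $f_\theta^{(i)}(\mathbf s)=\sum_{\mathbf z\in\mathbb N_0^N}f_\theta^{(i)}[\mathbf z]\mathbf s^{\mathbf z}$ pgfs on $\mathbb N_0^N$; $\mathbf M_\theta(i,k)=\partial f_\theta^{(i)}/\partial s_k(\mathbf 1)$ (finite), $\mathbf M_\theta(\mathbf 1-\mathbf s)$ is matrix–vector product. Allowable: each row and column has a positive entry. For nonnegative $\mathbf B$: $\|\mathbf B\|$ = sum of entries, $\|\mathbf B\|_1$ = max column sum, $(\mathbf B)_*$ = min column sum. Good: all $\mathbf M_\theta$ allowable, $\int|\log\|\mathbf M_{\theta_1}\|_1|d\nu+\int|\log(\mathbf M_{\theta_1})_*|d\nu<\infty$, and some word $(\theta_1,\dots,\theta_n)$ of positive $\nu$-cylinder measure has $\mathbf M_{\theta_1}\cdots\mathbf M_{\theta_n}$ strictly positive. $\lambda=\lim_n\frac1n\log\|\mathbf M_{\theta_1}\cdots\mathbf M_{\theta_n}\|$ ($\nu$-a.s. constant). Uniformly allowable with constant $\alpha$: $\inf\{\sum_{\mathbf w\in\mathbb N_0^N:\,w_i\ne0}f_\theta^{(k)}[\mathbf w]:\theta\in\mathcal I,\ k,i\in[N],\ \mathbf M_\theta(k,i)>0\}>\alpha$.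 *)

theory Defs
  imports "HOL-Probability.Probability"
begin

text \<open>Offspring vectors in N_0^N, represented as functions nat => nat vanishing outside [N].\<close>
definition offspring :: "nat \<Rightarrow> (nat \<Rightarrow> nat) set" where
  "offspring N = {z. \<forall>i. N \<le> i \<longrightarrow> z i = 0}"

definition is_pgf_coeffs :: "nat \<Rightarrow> ((nat \<Rightarrow> nat) \<Rightarrow> real) \<Rightarrow> bool" where
  "is_pgf_coeffs N p \<longleftrightarrow> (\<forall>z. 0 \<le> p z) \<and> (\<forall>z. z \<notin> offspring N \<longrightarrow> p z = 0)
     \<and> (p has_sum 1) (offspring N)"

definition pgf :: "nat \<Rightarrow> ((nat \<Rightarrow> nat) \<Rightarrow> real) \<Rightarrow> (nat \<Rightarrow> real) \<Rightarrow> real" where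
  "pgf N p s = (\<Sum>\<^sub>\<infinity>z\<in>offspring N. p z * (\<Prod>i<N. s i ^ z i))"

text \<open>First partial derivative at 1: d f / d s_i (1) = sum_z z_i p[z] (finite-mean assumption
  is expressed by summability).\<close>
definition pgf_d1 :: "nat \<Rightarrow> ((nat \<Rightarrow> nat) \<Rightarrow> real) \<Rightarrow> nat \<Rightarrow> real" where
  "pgf_d1 N p i = (\<Sum>\<^sub>\<infinity>z\<in>offspring N. real (z i) * p z)"

definition finite_mean :: "nat \<Rightarrow> ((nat \<Rightarrow> nat) \<Rightarrow> real) \<Rightarrow> bool" where
  "finite_mean N p \<longleftrightarrow> (\<forall>i<N. (\<lambda>z. real (z i) * p z) summable_on offspring N)"

definition pgf_d2 :: "nat \<Rightarrow> ((nat \<Rightarrow> nat) \<Rightarrow> real) \<Rightarrow> nat \<Rightarrow> nat \<Rightarrow> real" where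
  "pgf_d2 N p i j = (\<Sum>\<^sub>\<infinity>z\<in>offspring N.
      (real (z i) * real (z j) - (if i = j then real (z i) else 0)) * p z)"

definition finite_second_moments :: "nat \<Rightarrow> ((nat \<Rightarrow> nat) \<Rightarrow> real) \<Rightarrow> bool" where
  "finite_second_moments N p \<longleftrightarrow> (\<forall>i<N. \<forall>j<N.
     (\<lambda>z. (real (z i) * real (z j) - (if i = j then real (z i) else 0)) * p z) summable_on offspring N)"

text \<open>N x N matrices as nat => nat => real (entries with indices < N).\<close>
definition mat_mult :: "nat \<Rightarrow> (nat \<Rightarrow> nat \<Rightarrow> real) \<Rightarrow> (nat \<Rightarrow> nat \<Rightarrow> real) \<Rightarrow> (nat \<Rightarrow> nat \<Rightarrow> real)" where
  "mat_mult N A B = (\<lambda>i j. \<Sum>k<N. A i k * B k j)"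

definition mat_id :: "nat \<Rightarrow> nat \<Rightarrow> real" where
  "mat_id = (\<lambda>i j. if i = j then 1 else 0)"

fun mat_prod_seq :: "nat \<Rightarrow> (nat \<Rightarrow> nat \<Rightarrow> nat \<Rightarrow> real) \<Rightarrow> nat \<Rightarrow> nat \<Rightarrow> nat \<Rightarrow> real" where
  "mat_prod_seq N A 0 = mat_id"
| "mat_prod_seq N A (Suc n) = mat_mult N (mat_prod_seq N A n) (A n)"

definition mat_sum_norm :: "nat \<Rightarrow> (nat \<Rightarrow> nat \<Rightarrow> real) \<Rightarrow> real" where
  "mat_sum_norm N B = (\<Sum>i<N. \<Sum>j<N. B i j)"

definition mat_max_col :: "nat \<Rightarrow> (nat \<Rightarrow> nat \<Rightarrow> real) \<Rightarrow> real" where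
  "mat_max_col N B = Max ((\<lambda>j. \<Sum>i<N. B i j) ` {..<N})"

definition mat_min_col :: "nat \<Rightarrow> (nat \<Rightarrow> nat \<Rightarrow> real) \<Rightarrow> real" where
  "mat_min_col N B = Min ((\<lambda>j. \<Sum>i<N. B i j) ` {..<N})"

definition allowable :: "nat \<Rightarrow> (nat \<Rightarrow> nat \<Rightarrow> real) \<Rightarrow> bool" where
  "allowable N B \<longleftrightarrow> (\<forall>i<N. \<exists>j<N. B i j > 0) \<and> (\<forall>j<N. \<exists>i<N. B i j > 0)"

definition strictly_positive :: "nat \<Rightarrow> (nat \<Rightarrow> nat \<Rightarrow> real) \<Rightarrow> bool" where
  "strictly_positive N B \<longleftrightarrow> (\<forall>i<N. \<forall>j<N. B i j > 0)"

definition seq_space :: "(nat \<Rightarrow> 'i) measure" where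
  "seq_space = PiM UNIV (\<lambda>_. count_space UNIV)"

definition shift :: "(nat \<Rightarrow> 'i) \<Rightarrow> (nat \<Rightarrow> 'i)" where
  "shift \<omega> = (\<lambda>n. \<omega> (Suc n))"

definition shift_invariant_ergodic :: "(nat \<Rightarrow> 'i) measure \<Rightarrow> bool" where
  "shift_invariant_ergodic \<nu> \<longleftrightarrow> prob_space \<nu> \<and> sets \<nu> = sets seq_space
     \<and> shift \<in> measurable \<nu> \<nu> \<and> distr \<nu> \<nu> shift = \<nu>
     \<and> (\<forall>A\<in>sets \<nu>. shift -` A \<inter> space \<nu> = A \<longrightarrow> emeasure \<nu> A = 0 \<or> emeasure \<nu> A = 1)"

definition good :: "nat \<Rightarrow> ('i \<Rightarrow> nat \<Rightarrow> nat \<Rightarrow> real) \<Rightarrow> (nat \<Rightarrow> 'i) measure \<Rightarrow> bool" where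
  "good N M \<nu> \<longleftrightarrow> (\<forall>\<theta>. allowable N (M \<theta>))
     \<and> (\<integral>\<^sup>+\<omega>. ennreal \<bar>ln (mat_max_col N (M (\<omega> 0)))\<bar> \<partial>\<nu>)
       + (\<integral>\<^sup>+\<omega>. ennreal \<bar>ln (mat_min_col N (M (\<omega> 0)))\<bar> \<partial>\<nu>) < \<infinity>
     \<and> (\<exists>w::'i list. w \<noteq> [] \<and> emeasure \<nu> {\<omega>\<in>space \<nu>. \<forall>i<length w. \<omega> i = w ! i} > 0
          \<and> strictly_positive N (mat_prod_seq N (\<lambda>n. M (w ! n)) (length w)))"

end

theory Submission
  imports Defs
begin

lemma has_sum_finsum:
  fixes f :: "'j \<Rightarrow> 'a \<Rightarrow> real"
  assumes "finite I" "\<And>i. i \<in> I \<Longrightarrow> (f i has_sum a i) A"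
  shows "((\<lambda>x. \<Sum>i\<in>I. f i x) has_sum (\<Sum>i\<in>I. a i)) A"
  using assms
proof (induction I rule: finite_induct)
  case empty then show ?case by simp
next
  case (insert x F)
  have "((\<lambda>y. f x y + (\<Sum>i\<in>F. f i y)) has_sum (a x + (\<Sum>i\<in>F. a i))) A"
    by (intro has_sum_add) (use insert in auto)
  then show ?case using insert by simp
qed

lemma step1:
  fixes P A Q b :: real
  assumes "0 \<le> P" "P \<le> 1 - A + (A^2 - Q)/2" "Q \<le> A^2" "0 \<le> A" "0 \<le> b" "b \<le> 1"
  shows "(1-b)*P \<le> 1 - (A+b) + ((A+b)^2 - (Q+b^2))/2 \<and> Q + b^2 \<le> (A+b)^2 \<and> 0 \<le> (1-b)*P"
proof -
  have "(1-b)*P \<le> (1-b)*(1 - A + (A^2 - Q)/2)" using assms by (intro mult_left_mono) auto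
  also have "\<dots> = 1 - (A+b) + ((A+b)^2 - (Q+b^2))/2 - b*(A^2-Q)/2"
    by (simp add: field_simps power2_eq_square)
  also have "\<dots> \<le> 1 - (A+b) + ((A+b)^2 - (Q+b^2))/2"
    using assms by (simp add: mult_nonneg_nonneg)
  finally have 1: "(1-b)*P \<le> 1 - (A+b) + ((A+b)^2 - (Q+b^2))/2" .
  have "Q + b^2 \<le> A^2 + b^2 + 2*A*b" using assms by (simp add: add_increasing2)
  also have "\<dots> = (A+b)^2" by (simp add: power2_eq_square algebra_simps)
  finally show ?thesis using 1 assms by simp
qed

lemma stepm:
  fixes P A Q b :: real
  assumes "0 \<le> P" "P \<le> 1 - A + (A^2 - Q)/2" "Q \<le> A^2" "0 \<le> A" "0 \<le> b" "b \<le> 1"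
  shows "(1-b)^m*P \<le> 1 - (A+m*b) + ((A+m*b)^2 - (Q+m*b^2))/2 \<and> Q + m*b^2 \<le> (A+m*b)^2 \<and> 0 \<le> (1-b)^m*P"
proof (induction m)
  case 0 then show ?case using assms by simp
next
  case (Suc m)
  have "0 \<le> A + m*b" using assms by simp
  from step1[OF conjunct2[OF conjunct2[OF Suc]] conjunct1[OF Suc] conjunct1[OF conjunct2[OF Suc]] this assms(5,6)]
  show ?case by (simp add: algebra_simps)
qed

lemma pointwise:
  fixes s :: "nat \<Rightarrow> real" and z :: "nat \<Rightarrow> nat"
  assumes "\<And>j. j < n \<Longrightarrow> 0 \<le> s j \<and> s j \<le> 1"
  shows "(\<Prod>i<n. s i ^ z i) \<le> 1 - (\<Sum>i<n. z i * (1 - s i))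
          + ((\<Sum>i<n. z i * (1 - s i))^2 - (\<Sum>i<n. z i * (1 - s i)^2))/2
     \<and> (\<Sum>i<n. z i * (1 - s i)^2) \<le> (\<Sum>i<n. z i * (1 - s i))^2
     \<and> 0 \<le> (\<Prod>i<n. s i ^ z i) \<and> 0 \<le> (\<Sum>i<n. z i * (1 - s i))"
  using assms
proof (induction n)
  case 0 then show ?case by simp
next
  case (Suc n)
  let ?A = "\<Sum>i<n. z i * (1 - s i)" and ?Q = "\<Sum>i<n. z i * (1 - s i)^2" and ?P = "\<Prod>i<n. s i ^ z i"
  have IH: "?P \<le> 1 - ?A + (?A^2 - ?Q)/2" "?Q \<le> ?A^2" "0 \<le> ?P" "0 \<le> ?A" using Suc by auto
  have b: "0 \<le> 1 - s n" "1 - s n \<le> 1" using Suc.prems[of n] by auto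
  have e1: "(\<Prod>i<Suc n. s i ^ z i) = (1 - (1 - s n))^z n * ?P" by simp
  have e2: "(\<Sum>i<Suc n. z i * (1 - s i)) = ?A + z n * (1 - s n)" by simp
  have e3: "(\<Sum>i<Suc n. z i * (1 - s i)^2) = ?Q + z n * (1 - s n)^2" by simp
  from stepm[OF IH(3,1,2,4) b, of "z n"]
  show ?case unfolding e1 e2 e3 using b IH by simp
qed

theorem lemma5p2:
  fixes N :: nat
    and p :: "'i::countable \<Rightarrow> nat \<Rightarrow> (nat \<Rightarrow> nat) \<Rightarrow> real"
    and \<nu> :: "(nat \<Rightarrow> 'i) measure"
    and M :: "'i \<Rightarrow> nat \<Rightarrow> nat \<Rightarrow> real"
    and \<alpha> Mbd lam \<rho> :: real
  assumes "N \<ge> 2"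
    and pgfs: "\<And>\<theta> k. k < N \<Longrightarrow> is_pgf_coeffs N (p \<theta> k)"
    and means: "\<And>\<theta> k. k < N \<Longrightarrow> finite_mean N (p \<theta> k)"
    and M_def: "\<And>\<theta> k i. M \<theta> k i = pgf_d1 N (p \<theta> k) i"
    and erg: "shift_invariant_ergodic \<nu>"
    and good: "good N M \<nu>"
    and "\<alpha> > 0"
    and unif_allow: "(INF x\<in>{(\<theta>, k, i). k < N \<and> i < N \<and> M \<theta> k i > 0}.
                        (case x of (\<theta>, k, i) \<Rightarrow>
                          \<Sum>\<^sub>\<infinity>w\<in>{w\<in>offspring N. w i \<noteq> 0}. p \<theta> k w)) > \<alpha>"
    and second: "\<And>\<theta> k. k < N \<Longrightarrow> finite_second_moments N (p \<theta> k)"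
    and second_bd: "\<And>\<theta> i j k. i < N \<Longrightarrow> j < N \<Longrightarrow> k < N \<Longrightarrow> pgf_d2 N (p \<theta> k) i j < Mbd"
    and lyap: "AE \<omega> in \<nu>. (\<lambda>n. ln (mat_sum_norm N (mat_prod_seq N (\<lambda>m. M (\<omega> m)) n)) / real n)
                  \<longlonglongrightarrow> lam"
    and "lam > 0"
    and "0 < \<rho>" "\<rho> < 1" "\<rho> * exp lam > 1"
  shows "\<exists>\<delta>>0. \<forall>\<theta> s. (\<forall>j<N. 0 \<le> s j \<and> s j \<le> 1)
            \<longrightarrow> Max ((\<lambda>j. 1 - s j) ` {..<N}) \<le> \<delta>
            \<longrightarrow> (\<forall>k<N. 1 - \<rho> * (\<Sum>j<N. M \<theta> k j * (1 - s j)) \<ge> pgf N (p \<theta> k) s)"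
proof -
  define c :: "nat \<Rightarrow> nat \<Rightarrow> (nat \<Rightarrow> nat) \<Rightarrow> real" where
    "c = (\<lambda>i j z. real (z i) * real (z j) - (if i = j then real (z i) else 0))"
  have cnn: "0 \<le> c i j z" for i j z
  proof (cases "i = j")
    case True
    have "real (z i) \<le> real (z i) * real (z i)" by (cases "z i") auto
    then show ?thesis using True by (simp add: c_def)
  qed (simp add: c_def)
  have Pnn: "\<And>\<theta> k z. k < N \<Longrightarrow> 0 \<le> p \<theta> k z" using pgfs unfolding is_pgf_coeffs_def by blast
  have d2nn: "0 \<le> pgf_d2 N (p \<theta> k) i j" if "k < N" for \<theta> k i j
  proof -
    have "pgf_d2 N (p \<theta> k) i j = infsum (\<lambda>z. c i j z * p \<theta> k z) (offspring N)"
      by (simp add: pgf_d2_def c_def)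
    also have "\<dots> \<ge> 0" using cnn[of i j] Pnn[OF that] by (intro infsum_nonneg mult_nonneg_nonneg) auto
    finally show ?thesis .
  qed
  have N0: "0 < N" using \<open>N \<ge> 2\<close> by simp
  have Mbd: "0 < Mbd" using d2nn[OF N0, of undefined 0 0] second_bd[OF N0 N0 N0, of undefined] by linarith
  define \<delta> where "\<delta> = (1 - \<rho>) * \<alpha> / (real N * Mbd)"
  have \<delta>pos: "0 < \<delta>" unfolding \<delta>_def using Mbd N0 \<open>\<rho> < 1\<close> \<open>\<alpha> > 0\<close> by simp
  show ?thesis
  proof (intro exI[of _ \<delta>] conjI allI impI \<delta>pos)
    fix \<theta> s k
    assume hs: "\<forall>j<N. 0 \<le> s j \<and> s j \<le> 1" and hmax: "Max ((\<lambda>j. 1 - s j) ` {..<N}) \<le> \<delta>" and k: "k < N"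
    define P where "P = p \<theta> k"
    define Off where "Off = offspring N"
    have Pnn': "0 \<le> P z" for z using Pnn[OF k] unfolding P_def by blast
    have Phs: "(P has_sum 1) Off" using pgfs[OF k] unfolding is_pgf_coeffs_def P_def Off_def by blast
    have Mhs: "((\<lambda>z. real (z i) * P z) has_sum M \<theta> k i) Off" if "i < N" for i
      using means[OF k] that unfolding finite_mean_def M_def pgf_d1_def P_def Off_def
      by (simp add: has_sum_infsum)
    have Dhs: "((\<lambda>z. c i j z * P z) has_sum pgf_d2 N P i j) Off" if "i < N" "j < N" for i j
      using second[OF k] that unfolding finite_second_moments_def pgf_d2_def P_def Off_def c_def
      by (simp add: has_sum_infsum)
    have tle: "0 \<le> 1 - s j \<and> 1 - s j \<le> \<delta>" if "j < N" for j
    proof -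
      have "1 - s j \<le> Max ((\<lambda>j. 1 - s j) ` {..<N})" using that by (intro Max_ge) auto
      then have "1 - s j \<le> \<delta>" using hmax by linarith
      then show ?thesis using hs that by auto
    qed
    define R where "R = (\<lambda>z. P z - (\<Sum>i<N. (1 - s i) * (real (z i) * P z))
        + (\<Sum>i<N. \<Sum>j<N. ((1 - s i) * (1 - s j) / 2) * (c i j z * P z)))"
    have pw: "P z * (\<Prod>i<N. s i ^ z i) \<le> R z" for z
    proof -
      let ?A = "\<Sum>i<N. z i * (1 - s i)" and ?Q = "\<Sum>i<N. z i * (1 - s i)^2"
      have L: "(\<Prod>i<N. s i ^ z i) \<le> 1 - ?A + (?A^2 - ?Q)/2"
        using pointwise[of N s z] hs by blast
      have A2: "?A^2 = (\<Sum>i<N. \<Sum>j<N. real (z i) * real (z j) * ((1 - s i) * (1 - s j)))"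
        by (simp add: power2_eq_square sum_product algebra_simps)
      have Q2: "?Q = (\<Sum>i<N. \<Sum>j<N. (if i = j then real (z i) else 0) * ((1 - s i) * (1 - s j)))"
      proof -
        have "(\<Sum>j<N. (if i = j then real (z i) else 0) * ((1 - s i) * (1 - s j))) = z i * (1 - s i)^2"
          if "i < N" for i
        proof -
          have "(\<Sum>j<N. (if i = j then real (z i) else 0) * ((1 - s i) * (1 - s j)))
              = (\<Sum>j<N. if i = j then real (z i) * ((1 - s i) * (1 - s j)) else 0)"
            by (rule sum.cong) auto
          also have "\<dots> = z i * (1 - s i)^2" using that by (simp add: power2_eq_square)
          finally show ?thesis .
        qed
        then show ?thesis by (intro sum.cong) auto
      qed
      have AQ: "?A^2 - ?Q = (\<Sum>i<N. \<Sum>j<N. c i j z * ((1 - s i) * (1 - s j)))"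
        unfolding A2 Q2 c_def by (simp add: sum_subtractf[symmetric] left_diff_distrib)
      have "P z * (\<Prod>i<N. s i ^ z i) \<le> P z * (1 - ?A + (?A^2 - ?Q)/2)"
        using L Pnn' by (intro mult_left_mono) auto
      also have "\<dots> = R z"
        unfolding R_def AQ
        by (simp add: algebra_simps sum_distrib_left sum_divide_distrib)
      finally show ?thesis .
    qed
    have sumL: "(\<lambda>z. P z * (\<Prod>i<N. s i ^ z i)) summable_on Off"
    proof (rule summable_on_comparison_test[of P])
      show "P summable_on Off" using Phs by (auto simp: summable_on_def)
    next
      fix z
      have "(\<Prod>i<N. s i ^ z i) \<le> 1" using hs by (intro prod_le_1) (simp add: power_le_one)
      moreover have "0 \<le> (\<Prod>i<N. s i ^ z i)" using hs by (intro prod_nonneg) simp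
      ultimately show "P z * (\<Prod>i<N. s i ^ z i) \<le> P z" "0 \<le> P z * (\<Prod>i<N. s i ^ z i)"
        using Pnn'[of z] by (auto simp: mult_left_le)
    qed
    have Rhs: "(R has_sum (1 - (\<Sum>i<N. (1 - s i) * M \<theta> k i)
        + (\<Sum>i<N. \<Sum>j<N. ((1 - s i) * (1 - s j) / 2) * pgf_d2 N P i j))) Off"
    proof -
      have h1: "((\<lambda>z. \<Sum>i<N. (1 - s i) * (real (z i) * P z)) has_sum (\<Sum>i<N. (1 - s i) * M \<theta> k i)) Off"
        by (intro has_sum_finsum has_sum_cmult_right Mhs) auto
      have h2: "((\<lambda>z. \<Sum>i<N. \<Sum>j<N. ((1 - s i) * (1 - s j) / 2) * (c i j z * P z)) has_sum
          (\<Sum>i<N. \<Sum>j<N. ((1 - s i) * (1 - s j) / 2) * pgf_d2 N P i j)) Off"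
        by (intro has_sum_finsum has_sum_cmult_right Dhs) auto
      have "((\<lambda>z. P z + - (\<Sum>i<N. (1 - s i) * (real (z i) * P z))) has_sum (1 + - (\<Sum>i<N. (1 - s i) * M \<theta> k i))) Off"
        by (intro has_sum_add Phs has_sum_uminusI h1)
      from has_sum_add[OF this h2] show ?thesis unfolding R_def by simp
    qed
    have pgfle: "pgf N P s \<le> 1 - (\<Sum>i<N. (1 - s i) * M \<theta> k i)
        + (\<Sum>i<N. \<Sum>j<N. ((1 - s i) * (1 - s j) / 2) * pgf_d2 N P i j)"
      unfolding pgf_def Off_def[symmetric]
      by (rule has_sum_mono[OF has_sum_infsum[OF sumL] Rhs pw])
    have Mnn: "0 \<le> M \<theta> k i" if "i < N" for i
      using has_sum_nonneg[OF Mhs[OF that]] Pnn' by simp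
    have perI: "(\<Sum>j<N. ((1 - s i) * (1 - s j) / 2) * pgf_d2 N P i j) \<le> (1 - \<rho>) * ((1 - s i) * M \<theta> k i)"
      if i: "i < N" for i
    proof (cases "M \<theta> k i = 0")
      case True
      have z0: "real (z i) * P z = 0" if "z \<in> Off" for z
      proof -
        have sm: "(\<lambda>z. real (z i) * P z) summable_on Off" and iz: "infsum (\<lambda>z. real (z i) * P z) Off = 0"
          using Mhs[OF i] True unfolding has_sum_iff by auto
        show ?thesis
          by (rule nonneg_infsum_le_0D[OF _ sm _ that]) (use iz Pnn' in simp_all)
      qed
      have "pgf_d2 N P i j = 0" if "j < N" for j
      proof -
        have "((\<lambda>z. c i j z * P z) has_sum 0) Off"
        proof (rule has_sum_0)
          fix z assume "z \<in> Off"
          then show "c i j z * P z = 0" using z0[of z] unfolding c_def by auto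
        qed
        then show ?thesis using Dhs[OF i that] has_sum_unique by blast
      qed
      then show ?thesis using True by simp
    next
      case False
      then have Mpos: "M \<theta> k i > 0" using Mnn[OF i] by simp
      define S where "S = {w\<in>offspring N. w i \<noteq> 0}"
      let ?X = "{(\<theta>, k, i). k < N \<and> i < N \<and> M \<theta> k i > 0}"
      let ?F = "\<lambda>x. case x of (\<theta>, k, i) \<Rightarrow> \<Sum>\<^sub>\<infinity>w\<in>{w\<in>offspring N. w i \<noteq> 0}. p \<theta> k w"
      have mem: "(\<theta>, k, i) \<in> ?X" using k i Mpos by simp
      have bdd: "bdd_below (?F ` ?X)"
        by (rule bdd_belowI2[of _ 0]) (auto intro!: infsum_nonneg Pnn)
      have "\<alpha> < ?F (\<theta>, k, i)" using cINF_lower[OF bdd mem] unif_allow by linarith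
      then have a1: "\<alpha> < infsum P S" by (simp add: S_def P_def)
      have SO: "S \<subseteq> Off" by (auto simp: S_def Off_def)
      have "infsum P S \<le> infsum (\<lambda>z. real (z i) * P z) S"
      proof (rule infsum_mono)
        have "P summable_on Off" using Phs by (auto simp: summable_on_def)
        then show "P summable_on S" using SO by (rule summable_on_subset_banach)
        show "(\<lambda>z. real (z i) * P z) summable_on S"
        proof -
          have "(\<lambda>z. real (z i) * P z) summable_on Off" using Mhs[OF i] by (auto simp: summable_on_def)
          then show ?thesis using SO by (rule summable_on_subset_banach)
        qed
        fix z assume "z \<in> S"
        then have "1 \<le> real (z i)" by (simp add: S_def)
        then show "P z \<le> real (z i) * P z" using Pnn'[of z] by (simp add: mult_le_cancel_right1)
      qed
      also have "\<dots> = infsum (\<lambda>z. real (z i) * P z) Off"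
        by (rule infsum_cong_neutral) (auto simp: S_def Off_def)
      also have "\<dots> = M \<theta> k i" using Mhs[OF i] by (simp add: has_sum_iff)
      finally have Mgt: "\<alpha> < M \<theta> k i" using a1 by simp
      have "(\<Sum>j<N. ((1 - s i) * (1 - s j) / 2) * pgf_d2 N P i j) \<le> (\<Sum>j<N. ((1 - s i) * \<delta> / 2) * Mbd)"
      proof (rule sum_mono)
        fix j assume j: "j \<in> {..<N}"
        have "(1 - s i) * (1 - s j) \<le> (1 - s i) * \<delta>" using tle[OF i] tle[of j] j by (intro mult_left_mono) auto
        moreover have "pgf_d2 N P i j \<le> Mbd" using second_bd[OF i _ k, of j \<theta>] j by (simp add: P_def)
        ultimately show "((1 - s i) * (1 - s j) / 2) * pgf_d2 N P i j \<le> ((1 - s i) * \<delta> / 2) * Mbd"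
          using tle[OF i] tle[of j] j d2nn[OF k, of \<theta> i j] \<delta>pos
          by (intro mult_mono) (auto simp: P_def)
      qed
      also have "\<dots> = (1 - s i) * ((1 - \<rho>) * \<alpha>) / 2"
        using Mbd N0 by (simp add: \<delta>_def)
      also have "\<dots> \<le> (1 - \<rho>) * ((1 - s i) * M \<theta> k i)"
      proof -
        have "(1 - s i) * ((1 - \<rho>) * \<alpha>) \<le> (1 - s i) * ((1 - \<rho>) * M \<theta> k i)"
          using tle[OF i] Mgt \<open>\<rho> < 1\<close> by (intro mult_left_mono) auto
        moreover have "0 \<le> (1 - s i) * ((1 - \<rho>) * \<alpha>)" using tle[OF i] \<open>\<rho> < 1\<close> \<open>\<alpha> > 0\<close> by simp
        moreover have "(1 - s i) * ((1 - \<rho>) * M \<theta> k i) = (1 - \<rho>) * ((1 - s i) * M \<theta> k i)"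
          by (simp add: algebra_simps)
        ultimately show ?thesis by linarith
      qed
      finally show ?thesis .
    qed
    have "(\<Sum>i<N. \<Sum>j<N. ((1 - s i) * (1 - s j) / 2) * pgf_d2 N P i j) \<le> (\<Sum>i<N. (1 - \<rho>) * ((1 - s i) * M \<theta> k i))"
      by (rule sum_mono) (use perI in auto)
    also have "\<dots> = (1 - \<rho>) * (\<Sum>i<N. (1 - s i) * M \<theta> k i)"
      by (simp add: sum_distrib_left)
    finally have "pgf N P s \<le> 1 - \<rho> * (\<Sum>i<N. (1 - s i) * M \<theta> k i)"
      using pgfle by (simp add: algebra_simps)
    moreover have "(\<Sum>i<N. (1 - s i) * M \<theta> k i) = (\<Sum>j<N. M \<theta> k j * (1 - s j))"
      by (simp add: mult.commute)
    ultimately show "1 - \<rho> * (\<Sum>j<N. M \<theta> k j * (1 - s j)) \<ge> pgf N (p \<theta> k) s"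
      by (simp add: P_def)
  qed
qed

end
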